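(* Let $L>0$ and $m,r$ be integers with $1<r<m-1$. Then all coefficients in the $q$-expansion of \[ \frac{1}{(q;q^m)_L\,(q^{m-1};q^m)_L} - \frac{1}{(q^r;q^m)_L\,(q^{m-r};q^m)_L} \] are nonnegative if and only if $r\nmid(m-r)$ and $(m-r)\nmid r$.
   Context: $(a;q)_L=\prod_{j=0}^{L-1}(1-aq^j)$. *)

theory Defs
  imports "HOL-Computational_Algebra.Formal_Power_Series"
begin

text \<open>q-Pochhammer symbol (a;Q)_L = prod_{j<L} (1 - a Q^j) as a formal power series in q,
  specialised to a = q^k and Q = q^m, i.e. (q^k; q^m)_L = prod_{j<L} (1 - q^(k + m j)).\<close>
definition qpoch :: "nat \<Rightarrow> nat \<Rightarrow> nat \<Rightarrow> real fps" where
  "qpoch k m L = (\<Prod>j<L. 1 - fps_X ^ (k + m * j))"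

end

theory Submission imports Defs begin

definition cnt :: "'a set \<Rightarrow> ('a \<Rightarrow> nat) \<Rightarrow> nat \<Rightarrow> ('a \<Rightarrow> nat) set" where
  "cnt I c n = {x. (\<forall>i. i \<notin> I \<longrightarrow> x i = 0) \<and> (\<Sum>i\<in>I. x i * c i) = n}"

lemma cnt_empty: "cnt {} c n = (if n = 0 then {\<lambda>_. 0} else {})"
  by (auto simp: cnt_def)

lemma cnt_insert:
  assumes "finite I" "a \<notin> I" "c a > 0"
  shows "cnt (insert a I) c n =
    (\<Union>i\<in>{i. i \<le> n \<and> c a dvd i}. (\<lambda>x. x(a := i div c a)) ` cnt I c (n - i))"
proof (rule set_eqI, rule iffI)
  fix x assume x: "x \<in> cnt (insert a I) c n"
  have s: "x a * c a + (\<Sum>i\<in>I. x i * c i) = n"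
    using x assms by (simp add: cnt_def)
  define x' where "x' = x(a := 0)"
  have "(\<Sum>i\<in>I. x' i * c i) = (\<Sum>i\<in>I. x i * c i)"
    unfolding x'_def using assms by (intro sum.cong) auto
  hence "x' \<in> cnt I c (n - x a * c a)" using x s by (auto simp: cnt_def x'_def)
  moreover have "x = x'(a := (x a * c a) div c a)" using assms by (auto simp: x'_def)
  moreover have "x a * c a \<le> n \<and> c a dvd x a * c a" using s by auto
  ultimately show "x \<in> (\<Union>i\<in>{i. i \<le> n \<and> c a dvd i}. (\<lambda>x. x(a := i div c a)) ` cnt I c (n - i))"
    by blast
next
  fix y assume "y \<in> (\<Union>i\<in>{i. i \<le> n \<and> c a dvd i}. (\<lambda>x. x(a := i div c a)) ` cnt I c (n - i))"
  then obtain i x where i: "i \<le> n" "c a dvd i" and x: "x \<in> cnt I c (n - i)" and y: "y = x(a := i div c a)"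
    by auto
  have "(\<Sum>j\<in>I. y j * c j) = (\<Sum>j\<in>I. x j * c j)"
    unfolding y using assms by (intro sum.cong) auto
  moreover have "y a * c a = i" using i y by auto
  ultimately show "y \<in> cnt (insert a I) c n"
    using x i assms y by (auto simp: cnt_def)
qed

lemma finite_cnt: "finite I \<Longrightarrow> \<forall>i\<in>I. c i > 0 \<Longrightarrow> finite (cnt I c n)"
proof (induction I arbitrary: n rule: finite_induct)
  case empty then show ?case by (simp add: cnt_empty)
next
  case (insert a I) then show ?case by (simp add: cnt_insert)
qed

lemma inverse_one_minus_Xpow:
  assumes "k > 0"
  shows "inverse (1 - fps_X ^ k :: real fps) = Abs_fps (\<lambda>i. if k dvd i then 1 else 0)"
proof (rule fps_inverse_unique)
  show "(1 - fps_X ^ k) * Abs_fps (\<lambda>i. if k dvd i then 1 else 0) = (1 :: real fps)"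
  proof (rule fps_ext)
    fix n :: nat
    show "fps_nth ((1 - fps_X ^ k) * Abs_fps (\<lambda>i. if k dvd i then 1 else 0)) n = fps_nth (1 :: real fps) n"
    proof (cases "n < k")
      case True
      then show ?thesis using assms by (auto simp: algebra_simps fps_X_power_mult_nth dest: dvd_imp_le)
    next
      case False
      then have "k dvd n \<longleftrightarrow> k dvd (n - k)" by (simp add: dvd_minus_self)
      then show ?thesis using False assms by (auto simp: algebra_simps fps_X_power_mult_nth)
    qed
  qed
qed

lemma card_cnt:
  assumes "finite I" "\<forall>i\<in>I. c i > 0"
  shows "fps_nth (inverse (\<Prod>i\<in>I. 1 - fps_X ^ c i :: real fps)) n = real (card (cnt I c n))"
  using assms
proof (induction I arbitrary: n rule: finite_induct)
  case empty then show ?case by (simp add: cnt_empty)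
next
  case (insert a I)
  have ca: "c a > 0" using insert by auto
  have "fps_nth (inverse (\<Prod>i\<in>insert a I. 1 - fps_X ^ c i :: real fps)) n =
        fps_nth (inverse (1 - fps_X ^ c a) * inverse (\<Prod>i\<in>I. 1 - fps_X ^ c i :: real fps)) n"
    using insert by (simp add: fps_inverse_mult)
  also have "\<dots> = (\<Sum>i=0..n. (if c a dvd i then 1 else 0) * real (card (cnt I c (n - i))))"
    using insert ca by (simp add: fps_mult_nth inverse_one_minus_Xpow)
  also have "\<dots> = (\<Sum>i\<in>{i. i \<le> n \<and> c a dvd i}. real (card (cnt I c (n - i))))"
    by (rule sum.mono_neutral_cong_right) (simp_all, auto)
  also have "\<dots> = real (\<Sum>i\<in>{i. i \<le> n \<and> c a dvd i}. card ((\<lambda>x. x(a := i div c a)) ` cnt I c (n - i)))"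
  proof -
    have "card ((\<lambda>x. x(a := i div c a)) ` cnt I c (n - i)) = card (cnt I c (n - i))" for i
    proof (rule card_image, rule inj_onI)
      fix x y assume xy: "x \<in> cnt I c (n - i)" "y \<in> cnt I c (n - i)"
        and eq: "x(a := i div c a) = y(a := i div c a)"
      show "x = y"
      proof (rule ext)
        fix j
        show "x j = y j"
        proof (cases "j = a")
          case True
          then show ?thesis using xy insert(2) unfolding cnt_def by auto
        next
          case False
          have "(x(a := i div c a)) j = (y(a := i div c a)) j" using eq by simp
          then show ?thesis using False by simp
        qed
      qed
    qed
    then show ?thesis by simp
  qed
  also have "\<dots> = real (card (cnt (insert a I) c n))"
    unfolding cnt_insert[of I a c n, OF `finite I` `a \<notin> I` ca]
  proof (subst card_UN_disjoint)
    show "finite {i. i \<le> n \<and> c a dvd i}" by simp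
    show "\<forall>i\<in>{i. i \<le> n \<and> c a dvd i}. finite ((\<lambda>x. x(a := i div c a)) ` cnt I c (n - i))"
      using finite_cnt insert by auto
    show "\<forall>i\<in>{i. i \<le> n \<and> c a dvd i}. \<forall>j\<in>{i. i \<le> n \<and> c a dvd i}. i \<noteq> j \<longrightarrow>
       (\<lambda>x. x(a := i div c a)) ` cnt I c (n - i) \<inter> (\<lambda>x. x(a := j div c a)) ` cnt I c (n - j) = {}"
    proof (intro ballI impI)
      fix i j assume "i \<in> {i. i \<le> n \<and> c a dvd i}" "j \<in> {i. i \<le> n \<and> c a dvd i}" "i \<noteq> j"
      then have "i div c a \<noteq> j div c a" by (auto elim!: dvdE simp: ca)
      then show "(\<lambda>x. x(a := i div c a)) ` cnt I c (n - i) \<inter> (\<lambda>x. x(a := j div c a)) ` cnt I c (n - j) = {}"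
      proof (intro equals0I)
        fix z assume "z \<in> (\<lambda>x. x(a := i div c a)) ` cnt I c (n - i) \<inter> (\<lambda>x. x(a := j div c a)) ` cnt I c (n - j)"
        then obtain x y where z1: "z = x(a := i div c a)" and z2: "z = y(a := j div c a)" by blast
        have "z a = i div c a" using z1 by simp
        moreover have "z a = j div c a" using z2 by simp
        ultimately have "i div c a = j div c a" by simp
        with \<open>i div c a \<noteq> j div c a\<close> show False by blast
      qed
    qed
  qed simp
  finally show ?case .
qed


lemma sum_split0: "0 < (L::nat) \<Longrightarrow> (\<Sum>j<L. f j) = f 0 + (\<Sum>j\<in>{1..<L}. f j)"
proof -
  assume "0 < L"
  have "{..<L} = insert 0 {1..<L}"
  proof (rule set_eqI)
    fix x show "x \<in> {..<L} \<longleftrightarrow> x \<in> insert 0 {1..<L}" using \<open>0 < L\<close> by (cases x) auto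
  qed
  then show ?thesis by simp
qed

lemma sum_single:
  assumes "finite I" "a \<in> I"
  shows "(\<Sum>i\<in>I. (if i = a then k else 0) * (c i :: nat)) = k * c a"
proof -
  have "(\<Sum>i\<in>I. (if i = a then k else 0) * c i) = (\<Sum>i\<in>I. if i = a then k * c a else 0)"
    by (rule sum.cong) auto
  also have "\<dots> = k * c a" using assms by simp
  finally show ?thesis .
qed

locale qs =
  fixes L m r :: nat
  assumes L: "0 < L" and r1: "1 < r" and rm: "r < m - 1"
begin

abbreviation "s \<equiv> m - r"

lemma s2: "2 \<le> s" and m_eq: "m = r + s" using r1 rm by auto

definition I :: "(nat \<times> bool) set" where "I = {..<L} \<times> UNIV"
definition cA :: "nat \<times> bool \<Rightarrow> nat" where "cA = (\<lambda>(j,b). if b then m - 1 + m*j else 1 + m*j)"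
definition cB :: "nat \<times> bool \<Rightarrow> nat" where "cB = (\<lambda>(j,b). if b then s + m*j else r + m*j)"

lemma finI: "finite I" by (simp add: I_def)
lemma in_I: "(j, b) \<in> I \<longleftrightarrow> j < L" by (simp add: I_def)

lemma sum_I: "(\<Sum>i\<in>I. f i) = (\<Sum>j<L. f (j,False) + f (j,True))"
proof -
  have "(\<Sum>i\<in>I. f i) = (\<Sum>j<L. \<Sum>b\<in>UNIV. f (j,b))"
    unfolding I_def by (simp add: sum.cartesian_product)
  then show ?thesis by (simp add: UNIV_bool add.commute)
qed

lemma prod_I: "(\<Prod>i\<in>I. f i) = (\<Prod>j<L. f (j,False) * f (j,True))"
proof -
  have "(\<Prod>i\<in>I. f i) = (\<Prod>j<L. \<Prod>b\<in>UNIV. f (j,b))"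
    unfolding I_def by (simp add: prod.cartesian_product)
  then show ?thesis by (simp add: UNIV_bool mult.commute)
qed

lemma prodA: "qpoch 1 m L * qpoch (m-1) m L = (\<Prod>i\<in>I. 1 - fps_X ^ cA i)"
  by (simp add: prod_I qpoch_def cA_def prod.distrib)

lemma prodB: "qpoch r m L * qpoch s m L = (\<Prod>i\<in>I. 1 - fps_X ^ cB i)"
  by (simp add: prod_I qpoch_def cB_def prod.distrib)

lemma cA_pos: "\<forall>i\<in>I. 0 < cA i" using rm by (auto simp: cA_def)
lemma cB_pos: "\<forall>i\<in>I. 0 < cB i" using r1 rm by (auto simp: cB_def)

lemma coeff_eq:
  "fps_nth (inverse (qpoch 1 m L * qpoch (m - 1) m L) - inverse (qpoch r m L * qpoch (m - r) m L)) n
   = real (card (cnt I cA n)) - real (card (cnt I cB n))"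
  unfolding prodA prodB fps_sub_nth
  using card_cnt[OF finI cA_pos] card_cnt[OF finI cB_pos] by simp

lemma cA_small:
  assumes "n < m - 1"
  shows "cnt I cA n \<subseteq> {\<lambda>i. if i = (0,False) then n else 0}"
proof
  fix x assume x: "x \<in> cnt I cA n"
  have zero: "x i = 0" if "i \<noteq> (0,False)" for i
  proof (cases "i \<in> I")
    case False then show ?thesis using x by (cases i) (simp add: cnt_def)
  next
    case True
    have "x i * cA i \<le> (\<Sum>i\<in>I. x i * cA i)" using True finI by (intro member_le_sum) auto
    also have "\<dots> = n" using x by (simp add: cnt_def)
    finally have le: "x i * cA i \<le> n" .
    obtain j b where i: "i = (j,b)" by force
    have "cA i > n" using that assms i by (cases b; cases j) (auto simp: cA_def)
    then show ?thesis using le by (cases "x i") auto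
  qed
  have "(\<Sum>i\<in>I. x i * cA i) = (\<Sum>i\<in>I. (if i = (0,False) then x (0,False) else 0) * cA i)"
    by (rule sum.cong) (auto simp: zero)
  also have "\<dots> = x (0,False)" using sum_single[OF finI, of "(0,False)" "x (0,False)" cA] L
    by (simp add: in_I cA_def)
  finally have "x (0,False) = n" using x by (simp add: cnt_def)
  then have "x = (\<lambda>i. if i = (0,False) then n else 0)" using zero by auto
  then show "x \<in> {\<lambda>i. if i = (0,False) then n else 0}" by simp
qed

lemma card_A_small: "n < m - 1 \<Longrightarrow> card (cnt I cA n) \<le> 1"
  using card_mono[OF _ cA_small] by fastforce

lemma unit_in_B:
  assumes "k * cB a = n" "a \<in> I"
  shows "(\<lambda>i. if i = a then k else 0) \<in> cnt I cB n"
  using assms sum_single[OF finI assms(2), of k cB] by (auto simp: cnt_def)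

lemma card_B_ge2:
  assumes "k1 * cB a1 = n" "a1 \<in> I" "k2 * cB a2 = n" "a2 \<in> I" "a1 \<noteq> a2" "k1 > 0"
  shows "2 \<le> card (cnt I cB n)"
proof -
  have "(\<lambda>i. if i = a1 then k1 else 0) \<in> cnt I cB n" by (rule unit_in_B) (use assms in auto)
  moreover have "(\<lambda>i. if i = a2 then k2 else 0) \<in> cnt I cB n" by (rule unit_in_B) (use assms in auto)
  ultimately have "{(\<lambda>i. if i = a1 then k1 else 0), (\<lambda>i. if i = a2 then k2 else 0)} \<subseteq> cnt I cB n"
    by auto
  moreover have "(\<lambda>i. if i = a1 then k1 else 0) \<noteq> (\<lambda>i. if i = a2 then k2 else 0)"
    using assms(5,6) by (metis (full_types) less_numeral_extra(3))
  ultimately show ?thesis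
    using card_mono[OF finite_cnt[OF finI cB_pos]] by (metis card_2_iff)
qed

lemma only_if:
  assumes "r dvd s \<or> s dvd r"
  shows "\<exists>n. card (cnt I cA n) < card (cnt I cB n)"
proof -
  have ins: "(0,False) \<in> I" "(0,True) \<in> I" using L by (auto simp: in_I)
  show ?thesis
  proof (cases "r dvd s")
    case True
    have "2 \<le> card (cnt I cB s)"
      by (rule card_B_ge2[of 1 "(0,True)" _ "s div r" "(0,False)"])
         (use True ins r1 s2 in \<open>auto simp: cB_def intro: dvd_imp_le\<close>)
    moreover have "card (cnt I cA s) \<le> 1" using card_A_small r1 rm by simp
    ultimately show ?thesis by (intro exI[of _ s]) linarith
  next
    case False
    then have d: "s dvd r" using assms by simp
    have "2 \<le> card (cnt I cB r)"
      by (rule card_B_ge2[of 1 "(0,False)" _ "r div s" "(0,True)"])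
         (use d ins r1 s2 in \<open>auto simp: cB_def\<close>)
    moreover have "card (cnt I cA r) \<le> 1" using card_A_small r1 rm by simp
    ultimately show ?thesis by (intro exI[of _ r]) linarith
  qed
qed

end


context qs
begin

definition U :: "(nat \<times> bool \<Rightarrow> nat) \<Rightarrow> nat" where "U u = (\<Sum>j<L. u (j,False))"
definition V :: "(nat \<times> bool \<Rightarrow> nat) \<Rightarrow> nat" where "V u = (\<Sum>j<L. u (j,True))"
definition key :: "(nat \<times> bool \<Rightarrow> nat) \<Rightarrow> int" where "key u = int (U u) - int (V u)"

definition map1 :: "(nat \<times> bool \<Rightarrow> nat) \<Rightarrow> (nat \<times> bool \<Rightarrow> nat)" where
  "map1 u = (\<lambda>(j,b). if L \<le> j then 0 else if b then u (j,True)
                     else u (j,False) + (if j = 0 then (r - 1) * (U u - V u) else 0))"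
definition map2 :: "(nat \<times> bool \<Rightarrow> nat) \<Rightarrow> (nat \<times> bool \<Rightarrow> nat)" where
  "map2 u = (\<lambda>(j,b). if L \<le> j then 0 else if b then u (j,False)
                     else u (j,True) + (if j = 0 then (s - 1) * (V u - U u) else 0))"
definition shift :: "(nat \<times> bool \<Rightarrow> nat) \<Rightarrow> (nat \<times> bool \<Rightarrow> nat)" where
  "shift x = x((0,True) := x (0,True) + 1, (0,False) := x (0,False) - (m - 1))"

lemma map1_T [simp]: "j < L \<Longrightarrow> map1 u (j,True) = u (j,True)"
  by (simp add: map1_def)
lemma map1_F [simp]: "j < L \<Longrightarrow> map1 u (j,False) = u (j,False) + (if j = 0 then (r - 1) * (U u - V u) else 0)"
  by (simp add: map1_def)
lemma map2_T [simp]: "j < L \<Longrightarrow> map2 u (j,True) = u (j,False)"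
  by (simp add: map2_def)
lemma map2_F [simp]: "j < L \<Longrightarrow> map2 u (j,False) = u (j,True) + (if j = 0 then (s - 1) * (V u - U u) else 0)"
  by (simp add: map2_def)
lemma map1_out: "(j,b) \<notin> I \<Longrightarrow> map1 u (j,b) = 0" by (simp add: map1_def in_I)
lemma map2_out: "(j,b) \<notin> I \<Longrightarrow> map2 u (j,b) = 0" by (simp add: map2_def in_I)

lemma sum_delta0: "(\<Sum>j<L. g j + (if j = 0 then K else 0)) = (\<Sum>j<L. g j) + (K::nat)"
  using L by (simp add: sum.distrib)

lemma U_map1: "U (map1 u) = U u + (r - 1) * (U u - V u)"
proof -
  have "U (map1 u) = (\<Sum>j<L. u (j,False) + (if j = 0 then (r - 1) * (U u - V u) else 0))"
    unfolding U_def[of "map1 u"] by (rule sum.cong) auto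
  also have "\<dots> = U u + (r - 1) * (U u - V u)"
  proof -
    have "(\<Sum>j<L. u (j,False) + (if j = 0 then K else 0)) = U u + K" for K
      by (simp add: sum_delta0 U_def)
    then show ?thesis .
  qed
  finally show ?thesis .
qed
lemma V_map1: "V (map1 u) = V u"
  unfolding V_def by (rule sum.cong) auto
lemma U_map2: "U (map2 u) = V u + (s - 1) * (V u - U u)"
proof -
  have "U (map2 u) = (\<Sum>j<L. u (j,True) + (if j = 0 then (s - 1) * (V u - U u) else 0))"
    unfolding U_def[of "map2 u"] by (rule sum.cong) auto
  also have "\<dots> = V u + (s - 1) * (V u - U u)"
  proof -
    have "(\<Sum>j<L. u (j,True) + (if j = 0 then K else 0)) = V u + K" for K
      by (simp add: sum_delta0 V_def)
    then show ?thesis .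
  qed
  finally show ?thesis .
qed
lemma V_map2: "V (map2 u) = U u"
  unfolding V_def U_def by (rule sum.cong) auto

lemma key_map1:
  assumes "V u \<le> U u" shows "key (map1 u) = int r * (int (U u) - int (V u))"
proof -
  have "int ((r - 1) * (U u - V u)) = (int r - 1) * (int (U u) - int (V u))"
    using assms r1 by (simp add: of_nat_diff)
  then show ?thesis by (simp add: key_def U_map1 V_map1 algebra_simps)
qed
lemma key_map2:
  assumes "U u \<le> V u" shows "key (map2 u) = int s * (int (V u) - int (U u))"
proof -
  have "int ((s - 1) * (V u - U u)) = (int s - 1) * (int (V u) - int (U u))"
    using assms s2 by (simp add: of_nat_diff)
  then show ?thesis by (simp add: key_def U_map2 V_map2 algebra_simps)
qed

lemma shift_F0: "shift x (0,False) = x (0,False) - (m - 1)" by (simp add: shift_def)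
lemma shift_T0: "shift x (0,True) = x (0,True) + 1" by (simp add: shift_def)
lemma shift_other: "j \<noteq> 0 \<Longrightarrow> shift x (j,b) = x (j,b)" by (simp add: shift_def)

lemma key_shift:
  assumes "m - 1 \<le> x (0,False)"
  shows "key (shift x) = key x - int m"
proof -
  have "U (shift x) = shift x (0,False) + (\<Sum>j\<in>{1..<L}. shift x (j,False))"
    unfolding U_def by (rule sum_split0[OF L])
  also have "\<dots> = (x (0,False) - (m - 1)) + (\<Sum>j\<in>{1..<L}. x (j,False))"
    by (simp add: shift_F0 shift_other)
  finally have u1: "U (shift x) = (x (0,False) - (m - 1)) + (\<Sum>j\<in>{1..<L}. x (j,False))" .
  have u2: "U x = x (0,False) + (\<Sum>j\<in>{1..<L}. x (j,False))"
    unfolding U_def by (rule sum_split0[OF L])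
  have "V (shift x) = shift x (0,True) + (\<Sum>j\<in>{1..<L}. shift x (j,True))"
    unfolding V_def by (rule sum_split0[OF L])
  also have "\<dots> = (x (0,True) + 1) + (\<Sum>j\<in>{1..<L}. x (j,True))"
    by (simp add: shift_T0 shift_other)
  finally have v1: "V (shift x) = (x (0,True) + 1) + (\<Sum>j\<in>{1..<L}. x (j,True))" .
  have v2: "V x = x (0,True) + (\<Sum>j\<in>{1..<L}. x (j,True))"
    unfolding V_def by (rule sum_split0[OF L])
  show ?thesis unfolding key_def u1 u2 v1 v2 using assms m_eq r1 by (simp add: of_nat_diff)
qed


lemma sizeA_eq: "(\<Sum>i\<in>I. x i * cA i) = (\<Sum>j<L. x (j,False) * (1 + m*j) + x (j,True) * (m - 1 + m*j))"
  by (simp add: sum_I cA_def)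
lemma sizeB_eq: "(\<Sum>i\<in>I. x i * cB i) = (\<Sum>j<L. x (j,False) * (r + m*j) + x (j,True) * (s + m*j))"
  by (simp add: sum_I cB_def)

lemma size_map1:
  assumes "V u \<le> U u"
  shows "(\<Sum>i\<in>I. map1 u i * cA i) = (\<Sum>i\<in>I. u i * cB i)"
proof -
  define K where "K = (r - 1) * (U u - V u)"
  have A: "(\<Sum>i\<in>I. map1 u i * cA i) = (\<Sum>j<L. u (j,False) * (1 + m*j) + u (j,True) * (m - 1 + m*j)) + K"
  proof -
    have "(\<Sum>i\<in>I. map1 u i * cA i) = (\<Sum>j<L. (u (j,False) * (1 + m*j) + u (j,True) * (m - 1 + m*j)) + (if j = 0 then K else 0))"
      unfolding sizeA_eq by (rule sum.cong) (auto simp: K_def algebra_simps)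
    then show ?thesis by (simp only: sum_delta0)
  qed
  have C: "(\<Sum>j<L. u (j,False) * (1 + m*j) + u (j,True) * (m - 1 + m*j)) + (r - 1) * U u
         = (\<Sum>j<L. u (j,False) * (r + m*j) + u (j,True) * (s + m*j)) + (r - 1) * V u"
  proof -
    have t: "u (j,False) * (1 + m*j) + u (j,True) * (m - 1 + m*j) + (r - 1) * u (j,False)
           = u (j,False) * (r + m*j) + u (j,True) * (s + m*j) + (r - 1) * u (j,True)" for j
    proof -
      have e1: "m - 1 + m*j = (s + m*j) + (r - 1)" using m_eq r1 by simp
      have e2: "r + m*j = (1 + m*j) + (r - 1)" using r1 by simp
      show ?thesis unfolding e1 e2 by (simp add: algebra_simps)
    qed
    show ?thesis unfolding U_def V_def sum_distrib_left sum.distrib[symmetric] using t by simp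
  qed
  have "(r - 1) * (U u - V u) + (r - 1) * V u = (r - 1) * U u"
    using assms by (simp add: diff_mult_distrib2 mult_le_mono2)
  then show ?thesis using A C unfolding sizeB_eq K_def by linarith
qed

lemma size_map2:
  assumes "U u \<le> V u"
  shows "(\<Sum>i\<in>I. map2 u i * cA i) = (\<Sum>i\<in>I. u i * cB i)"
proof -
  define K where "K = (s - 1) * (V u - U u)"
  have A: "(\<Sum>i\<in>I. map2 u i * cA i) = (\<Sum>j<L. u (j,True) * (1 + m*j) + u (j,False) * (m - 1 + m*j)) + K"
  proof -
    have "(\<Sum>i\<in>I. map2 u i * cA i) = (\<Sum>j<L. (u (j,True) * (1 + m*j) + u (j,False) * (m - 1 + m*j)) + (if j = 0 then K else 0))"
      unfolding sizeA_eq by (rule sum.cong) (auto simp: K_def algebra_simps)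
    then show ?thesis by (simp only: sum_delta0)
  qed
  have C: "(\<Sum>j<L. u (j,True) * (1 + m*j) + u (j,False) * (m - 1 + m*j)) + (s - 1) * V u
         = (\<Sum>j<L. u (j,False) * (r + m*j) + u (j,True) * (s + m*j)) + (s - 1) * U u"
  proof -
    have t: "u (j,True) * (1 + m*j) + u (j,False) * (m - 1 + m*j) + (s - 1) * u (j,True)
           = u (j,False) * (r + m*j) + u (j,True) * (s + m*j) + (s - 1) * u (j,False)" for j
    proof -
      have e1: "m - 1 + m*j = (r + m*j) + (s - 1)" using m_eq s2 by simp
      have e2: "s + m*j = (1 + m*j) + (s - 1)" using s2 by simp
      show ?thesis unfolding e1 e2 by (simp add: algebra_simps)
    qed
    show ?thesis unfolding U_def V_def sum_distrib_left sum.distrib[symmetric] using t by simp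
  qed
  have "(s - 1) * (V u - U u) + (s - 1) * U u = (s - 1) * V u"
    using assms by (simp add: diff_mult_distrib2 mult_le_mono2)
  then show ?thesis using A C unfolding sizeB_eq K_def by linarith
qed

lemma size_shift:
  assumes "m - 1 \<le> x (0,False)"
  shows "(\<Sum>i\<in>I. shift x i * cA i) = (\<Sum>i\<in>I. x i * cA i)"
proof -
  have "(\<Sum>i\<in>I. shift x i * cA i) = (shift x (0,False) + shift x (0,True) * (m - 1))
      + (\<Sum>j\<in>{1..<L}. shift x (j,False) * (1 + m*j) + shift x (j,True) * (m - 1 + m*j))"
    unfolding sizeA_eq by (subst sum_split0[OF L]) simp
  also have "\<dots> = (x (0,False) + x (0,True) * (m - 1))
      + (\<Sum>j\<in>{1..<L}. x (j,False) * (1 + m*j) + x (j,True) * (m - 1 + m*j))"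
    using assms by (simp add: shift_F0 shift_T0 shift_other algebra_simps)
  also have "\<dots> = (\<Sum>i\<in>I. x i * cA i)"
    unfolding sizeA_eq by (subst sum_split0[OF L]) simp
  finally show ?thesis .
qed

lemma arith_big:
  fixes D E x :: nat
  assumes "\<not> r dvd s" "\<not> s dvd r" "r * D = s * E" "1 \<le> E" "(s - 1) * E \<le> x" "(r - 1) * D \<le> x"
  shows "m - 1 \<le> x"
proof -
  have "E \<noteq> 1" using assms(1,3) by (metis dvd_triv_left mult.right_neutral)
  hence E2: "2 \<le> E" using assms(4) by linarith
  have "D \<noteq> 0"
  proof
    assume "D = 0"
    then have "s * E = 0" using assms(3) by simp
    then show False using s2 assms(4) by simp
  qed
  moreover have "D \<noteq> 1" using assms(2,3) by (metis dvd_triv_left mult.right_neutral)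
  ultimately have D2: "2 \<le> D" by linarith
  have "r \<noteq> s" using assms(1) by auto
  show ?thesis
  proof (cases "r < s")
    case True
    have "(s - 1) * 2 \<le> (s - 1) * E" using E2 by (intro mult_le_mono2)
    then show ?thesis using assms(5) True m_eq by linarith
  next
    case False
    have "(r - 1) * 2 \<le> (r - 1) * D" using D2 by (intro mult_le_mono2)
    then show ?thesis using assms(6) False \<open>r \<noteq> s\<close> m_eq by linarith
  qed
qed

definition coll :: "nat \<Rightarrow> (nat \<times> bool \<Rightarrow> nat) \<Rightarrow> bool" where
  "coll n u = (\<exists>u'\<in>cnt I cB n. V u' \<le> U u' \<and> map1 u' = map2 u)"

lemma key_nat:
  assumes "V u' \<le> U u'" "U u \<le> V u" "map1 u' = map2 u"
  shows "r * (U u' - V u') = s * (V u - U u)"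
proof -
  have "int r * (int (U u') - int (V u')) = int s * (int (V u) - int (U u))"
    using key_map1[OF assms(1)] key_map2[OF assms(2)] assms(3) by simp
  then have "int (r * (U u' - V u')) = int (s * (V u - U u))" using assms(1,2) by (simp add: of_nat_diff)
  then show ?thesis by (simp only: of_nat_eq_iff)
qed

lemma coll_big:
  assumes "\<not> r dvd s" "\<not> s dvd r" "U u < V u" "coll n u"
  shows "m - 1 \<le> map2 u (0,False)"
proof -
  obtain u' where u': "V u' \<le> U u'" "map1 u' = map2 u" using assms(4) by (auto simp: coll_def)
  have eq: "r * (U u' - V u') = s * (V u - U u)" using key_nat[OF u'(1) _ u'(2)] assms(3) by simp
  have x1: "map2 u (0,False) = u (0,True) + (s - 1) * (V u - U u)" using L by simp
  have x2: "map2 u (0,False) = u' (0,False) + (r - 1) * (U u' - V u')" using L u'(2)[symmetric] by simp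
  show ?thesis
    by (rule arith_big[OF assms(1,2) eq]) (use assms(3) x1 x2 in auto)
qed


definition Phi :: "nat \<Rightarrow> (nat \<times> bool \<Rightarrow> nat) \<Rightarrow> (nat \<times> bool \<Rightarrow> nat)" where
  "Phi n u = (if V u \<le> U u then map1 u else if coll n u then shift (map2 u) else map2 u)"

lemma zero_out: "x \<in> cnt I c n \<Longrightarrow> i \<notin> I \<Longrightarrow> x i = 0"
  by (cases i) (simp add: cnt_def)

lemma size_cnt: "x \<in> cnt I c n \<Longrightarrow> (\<Sum>i\<in>I. x i * c i) = n"
  by (simp add: cnt_def)

lemma map1_out': "i \<notin> I \<Longrightarrow> map1 u i = 0" by (cases i) (simp add: map1_out)
lemma map2_out': "i \<notin> I \<Longrightarrow> map2 u i = 0" by (cases i) (simp add: map2_out)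
lemma shift_out': "i \<notin> I \<Longrightarrow> shift x i = x i"
proof (cases i)
  case (Pair j b)
  assume "i \<notin> I"
  then have "j \<noteq> 0" using L Pair by (auto simp: in_I)
  then show ?thesis using Pair by (simp add: shift_other)
qed

lemma Phi_in:
  assumes nd: "\<not> r dvd s" "\<not> s dvd r" and u: "u \<in> cnt I cB n"
  shows "Phi n u \<in> cnt I cA n"
proof (cases "V u \<le> U u")
  case True
  then show ?thesis using size_map1[OF True] size_cnt[OF u]
    by (simp add: Phi_def cnt_def map1_out')
next
  case False
  then have le: "U u \<le> V u" and lt: "U u < V u" by auto
  show ?thesis
  proof (cases "coll n u")
    case True
    have big: "m - 1 \<le> map2 u (0,False)" by (rule coll_big[OF nd lt True])
    show ?thesis using False True size_shift[of "map2 u", OF big] size_map2[OF le] size_cnt[OF u]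
      by (simp add: Phi_def cnt_def map2_out' shift_out')
  next
    case c: False
    show ?thesis using False c size_map2[OF le] size_cnt[OF u]
      by (simp add: Phi_def cnt_def map2_out')
  qed
qed

lemma pair_ext:
  assumes "\<And>j. j < L \<Longrightarrow> u (j,True) = w (j,True)" "\<And>j. j < L \<Longrightarrow> u (j,False) = w (j,False)"
    "\<forall>i. i \<notin> I \<longrightarrow> u i = 0" "\<forall>i. i \<notin> I \<longrightarrow> w i = 0"
  shows "u = w"
proof (rule ext)
  fix i show "u i = w i"
  proof (cases i)
    case (Pair j b)
    show ?thesis
    proof (cases "j < L")
      case True then show ?thesis using assms(1,2) Pair by (cases b) auto
    next
      case False then show ?thesis using assms(3,4) Pair by (auto simp: in_I)
    qed
  qed
qed

lemma map1_inj:
  assumes zu: "\<forall>i. i \<notin> I \<longrightarrow> u i = 0" and zw: "\<forall>i. i \<notin> I \<longrightarrow> w i = 0"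
    and le: "V u \<le> U u" "V w \<le> U w" and eq: "map1 u = map1 w"
  shows "u = w"
proof -
  have T: "u (j,True) = w (j,True)" if "j < L" for j
    using fun_cong[OF eq, of "(j,True)"] that by simp
  have VV: "V u = V w" unfolding V_def by (rule sum.cong) (auto simp: T)
  have k: "key (map1 u) = key (map1 w)" using eq by simp
  have "int r * (int (U u) - int (V u)) = int r * (int (U w) - int (V w))"
    using k unfolding key_map1[OF le(1)] key_map1[OF le(2)] .
  then have UU: "U u = U w" using r1 VV by simp
  have F: "u (j,False) = w (j,False)" if "j < L" for j
  proof -
    have e: "u (j,False) + (if j = 0 then (r-1)*(U u - V u) else 0) = w (j,False) + (if j = 0 then (r-1)*(U w - V w) else 0)"
      using fun_cong[OF eq, of "(j,False)"] that by simp
    then show ?thesis unfolding UU VV by simp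
  qed
  show ?thesis by (rule pair_ext[OF T F zu zw])
qed

lemma map2_inj:
  assumes zu: "\<forall>i. i \<notin> I \<longrightarrow> u i = 0" and zw: "\<forall>i. i \<notin> I \<longrightarrow> w i = 0"
    and le: "U u \<le> V u" "U w \<le> V w" and eq: "map2 u = map2 w"
  shows "u = w"
proof -
  have F: "u (j,False) = w (j,False)" if "j < L" for j
    using fun_cong[OF eq, of "(j,True)"] that by simp
  have UU: "U u = U w" unfolding U_def by (rule sum.cong) (auto simp: F)
  have k: "key (map2 u) = key (map2 w)" using eq by simp
  have "int s * (int (V u) - int (U u)) = int s * (int (V w) - int (U w))"
    using k unfolding key_map2[OF le(1)] key_map2[OF le(2)] .
  then have "int (V u) - int (U u) = int (V w) - int (U w)"
    using s2 by (metis mult_cancel_left of_nat_eq_0_iff not_numeral_le_zero)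
  then have VV: "V u = V w" using UU by simp
  have T: "u (j,True) = w (j,True)" if "j < L" for j
  proof -
    have e: "u (j,True) + (if j = 0 then (s-1)*(V u - U u) else 0) = w (j,True) + (if j = 0 then (s-1)*(V w - U w) else 0)"
      using fun_cong[OF eq, of "(j,False)"] that by simp
    then show ?thesis unfolding UU VV by simp
  qed
  show ?thesis by (rule pair_ext[OF T F zu zw])
qed

lemma shift_inj:
  assumes "m - 1 \<le> x (0,False)" "m - 1 \<le> y (0,False)" "shift x = shift y"
  shows "x = y"
proof (rule ext)
  fix i show "x i = y i"
  proof (cases i)
    case (Pair j b)
    show ?thesis
    proof (cases "j = 0")
      case True
      show ?thesis
      proof (cases b)
        case True then show ?thesis using fun_cong[OF assms(3), of "(0,True)"] Pair \<open>j = 0\<close>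
          by (simp add: shift_T0)
      next
        case False then show ?thesis using fun_cong[OF assms(3), of "(0,False)"] Pair \<open>j = 0\<close> assms(1,2)
          by (simp add: shift_F0)
      qed
    next
      case False then show ?thesis using fun_cong[OF assms(3), of "(j,b)"] Pair by (simp add: shift_other)
    qed
  qed
qed

lemma key_coll:
  assumes "U w < V w" "coll n w"
  shows "\<exists>D. key (map2 w) = int r * D"
proof -
  obtain u' where u': "V u' \<le> U u'" "map1 u' = map2 w" using assms(2) by (auto simp: coll_def)
  show ?thesis using key_map1[OF u'(1)] u'(2) by auto
qed

lemma cross13:
  assumes nd: "\<not> r dvd s" "\<not> s dvd r" and le: "V u \<le> U u" and w: "U w < V w" "coll n w"
    and eq: "map1 u = shift (map2 w)"
  shows False
proof -
  obtain D where D: "key (map2 w) = int r * D" using key_coll[OF w] by blast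
  have big: "m - 1 \<le> map2 w (0,False)" by (rule coll_big[OF nd w])
  have "int r * (int (U u) - int (V u)) = int r * D - int m"
    using key_map1[OF le] key_shift[of "map2 w", OF big] D eq by simp
  then have "int s = int r * (D - (int (U u) - int (V u)) - 1)"
    using m_eq by (simp add: algebra_simps)
  then have "int r dvd int s" by (rule dvdI)
  then show False using nd(1) by (simp add: int_dvd_int_iff)
qed

lemma cross23:
  assumes nd: "\<not> r dvd s" "\<not> s dvd r" and u: "U u < V u" and w: "U w < V w" "coll n w"
    and eq: "map2 u = shift (map2 w)"
  shows False
proof -
  have big: "m - 1 \<le> map2 w (0,False)" by (rule coll_big[OF nd w])
  have "int s * (int (V u) - int (U u)) = int s * (int (V w) - int (U w)) - int m"
    using key_map2[OF less_imp_le[OF u]] key_map2[OF less_imp_le[OF w(1)]] key_shift[of "map2 w", OF big] eq by simp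
  then have "int r = int s * ((int (V w) - int (U w)) - (int (V u) - int (U u)) - 1)"
    using m_eq by (simp add: algebra_simps)
  then have "int s dvd int r" by (rule dvdI)
  then show False using nd(2) by (simp add: int_dvd_int_iff)
qed

lemma Phi_inj:
  assumes nd: "\<not> r dvd s" "\<not> s dvd r"
  shows "inj_on (Phi n) (cnt I cB n)"
proof (rule inj_onI)
  fix u w assume u: "u \<in> cnt I cB n" and w: "w \<in> cnt I cB n" and eq: "Phi n u = Phi n w"
  have zu: "\<forall>i. i \<notin> I \<longrightarrow> u i = 0" and zw: "\<forall>i. i \<notin> I \<longrightarrow> w i = 0"
    using u w by (auto simp: cnt_def)
  show "u = w"
  proof (cases "V u \<le> U u")
    case u1: True
    show ?thesis
    proof (cases "V w \<le> U w")
      case True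
      then show ?thesis using map1_inj[OF zu zw u1 True] eq u1 by (simp add: Phi_def)
    next
      case w1: False
      show ?thesis
      proof (cases "coll n w")
        case True
        then have False using cross13[OF nd u1 _ True] w1 eq u1 by (simp add: Phi_def)
        then show ?thesis ..
      next
        case False
        have "map1 u = map2 w" using eq u1 w1 False by (simp add: Phi_def)
        then have "coll n w" using u u1 unfolding coll_def by blast
        then have False using False by simp
        then show ?thesis ..
      qed
    qed
  next
    case u1: False
    show ?thesis
    proof (cases "V w \<le> U w")
      case w1: True
      show ?thesis
      proof (cases "coll n u")
        case True
        then have False using cross13[OF nd w1 _ True] w1 eq u1 by (simp add: Phi_def)
        then show ?thesis ..
      next
        case False
        have "map1 w = map2 u" using eq u1 w1 False by (simp add: Phi_def)
        then have "coll n u" using w w1 unfolding coll_def by blast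
        then have False using False by simp
        then show ?thesis ..
      qed
    next
      case w1: False
      have ul: "U u < V u" "U u \<le> V u" and wl: "U w < V w" "U w \<le> V w" using u1 w1 by auto
      show ?thesis
      proof (cases "coll n u")
        case cu: True
        show ?thesis
        proof (cases "coll n w")
          case cw: True
          have "map2 u = map2 w"
            using shift_inj[of "map2 u" "map2 w", OF coll_big[OF nd ul(1) cu] coll_big[OF nd wl(1) cw]] eq u1 w1 cu cw
            by (simp add: Phi_def)
          then show ?thesis by (rule map2_inj[OF zu zw ul(2) wl(2)])
        next
          case cw: False
          have False using cross23[OF nd wl(1) ul(1) cu] eq u1 w1 cu cw by (simp add: Phi_def)
          then show ?thesis ..
        qed
      next
        case cu: False
        show ?thesis
        proof (cases "coll n w")
          case cw: True
          have False using cross23[OF nd ul(1) wl(1) cw] eq u1 w1 cu cw by (simp add: Phi_def)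
          then show ?thesis ..
        next
          case cw: False
          have "map2 u = map2 w" using eq u1 w1 cu cw by (simp add: Phi_def)
          then show ?thesis by (rule map2_inj[OF zu zw ul(2) wl(2)])
        qed
      qed
    qed
  qed
qed

lemma if_dir:
  assumes nd: "\<not> r dvd s" "\<not> s dvd r"
  shows "card (cnt I cB n) \<le> card (cnt I cA n)"
  by (rule card_inj_on_le[OF Phi_inj[OF nd]]) (use Phi_in[OF nd] finite_cnt[OF finI cA_pos] in auto)

end

theorem theorem4:
  fixes L m r :: nat
  assumes "L > 0" and "1 < r" and "r < m - 1"
  shows "(\<forall>n. fps_nth (inverse (qpoch 1 m L * qpoch (m - 1) m L)
                      - inverse (qpoch r m L * qpoch (m - r) m L)) n \<ge> 0)
         \<longleftrightarrow> (\<not> r dvd (m - r) \<and> \<not> (m - r) dvd r)"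
proof -
  interpret qs L m r using assms by unfold_locales auto
  show ?thesis
  proof
    assume H: "\<forall>n. fps_nth (inverse (qpoch 1 m L * qpoch (m - 1) m L)
                      - inverse (qpoch r m L * qpoch (m - r) m L)) n \<ge> 0"
    show "\<not> r dvd (m - r) \<and> \<not> (m - r) dvd r"
    proof (rule ccontr)
      assume "\<not> (\<not> r dvd (m - r) \<and> \<not> (m - r) dvd r)"
      then obtain n where n: "card (cnt I cA n) < card (cnt I cB n)" using only_if by auto
      have "0 \<le> real (card (cnt I cA n)) - real (card (cnt I cB n))" using H coeff_eq by metis
      then show False using n by linarith
    qed
  next
    assume nd: "\<not> r dvd (m - r) \<and> \<not> (m - r) dvd r"
    show "\<forall>n. fps_nth (inverse (qpoch 1 m L * qpoch (m - 1) m L)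
                      - inverse (qpoch r m L * qpoch (m - r) m L)) n \<ge> 0"
    proof
      fix n
      have "card (cnt I cB n) \<le> card (cnt I cA n)" using if_dir nd by auto
      then show "fps_nth (inverse (qpoch 1 m L * qpoch (m - 1) m L)
                      - inverse (qpoch r m L * qpoch (m - r) m L)) n \<ge> 0"
        unfolding coeff_eq by simp
    qed
  qed
qed

end
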